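(* If $\Gamma;\Sigma;\theta\vdash_{pc}e:\tau$ is derivable in the type system of $\lambda$-WHR, $\theta'$ is a state environment with $\theta'\sqsupseteq\theta$, $m\in\mathbb{N}$, and $\delta$ is a substitution with $(\delta,\theta',m)\in\mathcal{V}[\![\Gamma]\!]$, then $(\delta(e),\theta',m)\in\mathcal{E}^{pc}[\![\tau]\!]$.
   Context: **Policies.** Fix a set of actors $a$ and a set of locks $\sigma$. A lock set $\Sigma$ is a set of locks. A clause is a pair $(\Sigma \Rightarrow a)$; a policy $p$ is a set of clauses. $p \sqsubseteq q$ iff for every $(\Sigma_2\Rightarrow a)\in q$ there is $(\Sigma_1\Rightarrow a)\in p$ with $\Sigma_1\subseteq\Sigma_2$. $\bot=\{(\emptyset\Rightarrow a)\mid a \text{ an actor}\}$. $p\sqcup q=\{(\Sigma_1\cup\Sigma_2\Rightarrow a)\mid (\Sigma_1\Rightarrow a)\in p,(\Sigma_2\Rightarrow a)\in q\}$. Specialization: $p|_\Sigma=\{(\Sigma_1\setminus\Sigma\Rightarrow a)\mid(\Sigma_1\Rightarrow a)\in p\}$. A fixed function $\mathrm{LockPolicy}$ assigns a policy to each lock. **Types.** Raw types $A ::= \mathsf{unit}\mid\mathsf{nat}\mid \tau_1+\tau_2\mid\tau_1\times\tau_2\mid \mathsf{ref}\,\tau\mid \tau_1\xrightarrow{\Sigma,p}\tau_2$; labeled types $\tau ::= A^p$. For $\tau=A^p$: $\tau\sqsubseteq q$ means $p\sqsubseteq q$; $q\sqsubseteq\tau$ means $q\sqsubseteq p$; $\tau|_\Sigma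 = A^{p|_\Sigma}$. **Syntax.** Expressions: $x\mid ()\mid n\ (n\in\mathbb{N})\mid \lambda x.e\mid (e,e')\mid \mathsf{fst}(e)\mid\mathsf{snd}(e)\mid\mathsf{inl}(e)\mid\mathsf{inr}(e)\mid \mathsf{case}\ e\ \mathsf{of}\ \mathsf{inl}\,x\Rightarrow e'\mid\mathsf{inr}\,y\Rightarrow e''\mid e\,e'\mid \mathsf{new}(e,\tau)\mid\ !e\mid e:=e'\mid \mathsf{open}\ \sigma\ \mathsf{in}\ e\mid\mathsf{opened}\ \sigma\ \mathsf{in}\ e\mid\mathsf{close}\ \sigma\ \mathsf{in}\ e\mid\mathsf{closed}\ \sigma\ \mathsf{in}\ e\mid \mathsf{when}\ \sigma\ \mathsf{then}\ e\ \mathsf{else}\ e'\mid l$ ($l$ ranging over a countably infinite set of locations). Values: $v::=\lambda x.e\mid(v,v')\mid\mathsf{inl}(v)\mid\mathsf{inr}(v)\mid()\mid l\mid n$; $\mathcal{V}$ is the set of values. $[v/x]e$ is substitution; for a map $\delta$ from variables to values, $\delta(e)$ substitutes simultaneously. A state $S$ is a finite map from locations to pairs $(v,\tau)$; write $S(l)=v$, $\mathrm{type}(S,l)=\tau$. A state environment $\theta$ is a finite map from locations to labeled types; $\theta'\sqsupseteq\theta$ iff $\theta\subseteq\theta'$ as graphs. **Observations.** $\omega::=\varepsilon\mid \mathsf{wr}_{l,\tau}(v)\mid\mathsf{open}(\sigma)\mid\mathsf{close}(\sigma)\mid\mathsf{unopen}(\sigma)\mid\mathsf{unclose}(\sigma)$.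 $\mathrm{pol}(\mathsf{wr}_{l,A^p}(v))=p$; the policy of each of the four lock observations on $\sigma$ is $\mathrm{LockPolicy}(\sigma)$; $\mathrm{pol}(\varepsilon)$ is undefined. **Reduction** $e,\Sigma,S\to e',S',\omega,\Sigma'$ ($\Sigma$ = open locks, $\Sigma'$ = active lock set). Congruence rules (the premise step's $S',\omega,\Sigma'$ are propagated unchanged): reduce $e$ inside $\mathsf{new}(e,\tau)$, $!e$, $e:=e'$, $l:=e$, $e\,e'$, $(\lambda x.e)\,e$, $(e,e')$, $(v,e)$, $\mathsf{fst}(e)$, $\mathsf{snd}(e)$, $\mathsf{inl}(e)$, $\mathsf{inr}(e)$, and the scrutinee of $\mathsf{case}$, all with the same open-lock set $\Sigma$. Lock rules: $\mathsf{open}\ \sigma\ \mathsf{in}\ e,\Sigma,S\to \mathsf{opened}\ \sigma\ \mathsf{in}\ e,S,\mathsf{open}(\sigma),\Sigma$; if $e,\Sigma\cup\{\sigma\},S\to e',S',\omega,\Sigma'$ then $\mathsf{opened}\ \sigma\ \mathsf{in}\ e,\Sigma,S\to\mathsf{opened}\ \sigma\ \mathsf{in}\ e',S',\omega,\Sigma'$; $\mathsf{opened}\ \sigma\ \mathsf{in}\ v,\Sigma,S\to v,S,\mathsf{unopen}(\sigma),\Sigma$; analogously for $\mathsf{close}/\mathsf{closed}$ with $\Sigma\setminus\{\sigma\}$ and observations $\mathsf{close}(\sigma)$, $\mathsf{unclose}(\sigma)$. If $\sigma\in\Sigma$ and $e,\Sigma,S\to e'',S',\omega,\Sigma'$ then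 $\mathsf{when}\ \sigma\ \mathsf{then}\ e\ \mathsf{else}\ e',\Sigma,S\to\mathsf{when}\ \sigma\ \mathsf{then}\ e''\ \mathsf{else}\ e',S',\omega,\Sigma'$; if $\sigma\notin\Sigma$ and $e',\Sigma,S\to e'',S',\omega,\Sigma'$ then it steps to $\mathsf{when}\ \sigma\ \mathsf{then}\ e\ \mathsf{else}\ e''$; if $\sigma\in\Sigma$, $\mathsf{when}\ \sigma\ \mathsf{then}\ v\ \mathsf{else}\ e'\to v$; if $\sigma\notin\Sigma$, $\mathsf{when}\ \sigma\ \mathsf{then}\ e\ \mathsf{else}\ v\to v$ (both with $S$ unchanged, $\varepsilon$, active set $\Sigma$). Base rules (state unchanged unless stated, active set $\Sigma$): $!l\to v$ with $\varepsilon$ if $S(l)=v$; $\mathsf{new}(v,\tau),\Sigma,S\to l,S\cup\{l\mapsto(v,\tau)\},\mathsf{wr}_{l,\tau}(v),\Sigma$ for any $l\notin\mathrm{dom}(S)$; $l:=v,\Sigma,S\to (),S[l\mapsto(v,\tau)],\mathsf{wr}_{l,\tau}(v),\Sigma$ if $l\in\mathrm{dom}(S)$, $\mathrm{type}(S,l)=\tau$; $(\lambda x.e)\,v\to[v/x]e$, $\mathsf{fst}(v,v')\to v$, $\mathsf{snd}(v,v')\to v'$, $\mathsf{case}\ \mathsf{inl}(v)\ldots\to[v/x]e'$, $\mathsf{case}\ \mathsf{inr}(v)\ldots\to[v/y]e''$, all with $\varepsilon$. **Subtyping** $<:$: $A^p<:B^{p'}$ if $p\sqsubseteq p'$ and $A<:B$;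 $\mathsf{unit}<:\mathsf{unit}$; $\mathsf{nat}<:\mathsf{nat}$; $\mathsf{ref}\,\tau<:\mathsf{ref}\,\tau$; $\tau_0\times\tau_2<:\tau_1\times\tau_3$ and $\tau_0+\tau_2<:\tau_1+\tau_3$ if $\tau_0<:\tau_1,\tau_2<:\tau_3$; $\tau_1\xrightarrow{\Sigma,p}\tau_2<:\tau_0\xrightarrow{\Sigma',p'}\tau_3$ if $\tau_0<:\tau_1$, $\tau_2<:\tau_3$, $p'\sqsubseteq p$, $\Sigma\subseteq\Sigma'$. **Typing** $\Gamma;\Sigma;\theta\vdash_{pc}e:\tau$: var: $x:\tau$ if $x:\tau\in\Gamma$; $():\mathsf{unit}^\bot$; $n:\mathsf{nat}^\bot$; $l:(\mathsf{ref}\,\theta(l))^\bot$; $\lambda$: from $\Gamma,x:\tau_1;\Sigma';\theta\vdash_{pc'}e:\tau_2$ infer $\Gamma;\Sigma;\theta\vdash_{pc}\lambda x.e:(\tau_1\xrightarrow{\Sigma',pc'}\tau_2)^\bot$; open/opened: from $\Gamma;\Sigma\cup\{\sigma\};\theta\vdash_{pc}e:\tau$ and $pc\sqsubseteq\mathrm{LockPolicy}(\sigma)$ infer $\mathsf{open}\ \sigma\ \mathsf{in}\ e:\tau$ and $\mathsf{opened}\ \sigma\ \mathsf{in}\ e:\tau$ under $\Gamma;\Sigma;\theta\vdash_{pc}$; close/closed likewise with $\Sigma\setminus\{\sigma\}$; pair: $e_i:\tau_i$ gives $(e_1,e_2):(\tau_1\times\tau_2)^\bot$; fst/snd: $e:(\tau_1\times\tau_2)^p$,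 $p\sqsubseteq\tau_i$ gives $\mathsf{fst}(e):\tau_1$, resp. $\mathsf{snd}(e):\tau_2$; $e:\tau_1$ gives $\mathsf{inl}(e):(\tau_1+\tau_2)^\bot$, $e:\tau_2$ gives $\mathsf{inr}(e):(\tau_1+\tau_2)^\bot$; case: $e:(\tau_1+\tau_2)^p$, $p\sqsubseteq\tau$, $\Gamma,x:\tau_1;\Sigma;\theta\vdash_{pc\sqcup p}e_1:\tau$, $\Gamma,y:\tau_2;\Sigma;\theta\vdash_{pc\sqcup p}e_2:\tau$ give $\mathsf{case}\ e\ \mathsf{of}\ \mathsf{inl}\,x\Rightarrow e_1\mid\mathsf{inr}\,y\Rightarrow e_2:\tau$; sub: from $\Gamma;\Sigma;\theta\vdash_{pc'}e:\tau'$, $pc\sqsubseteq pc'$, $\tau'<:\tau$ infer $\Gamma;\Sigma;\theta\vdash_{pc}e:\tau$; app: $e_1:(\tau_1\xrightarrow{\Sigma',pc'}\tau_2)^p$, $e_2:\tau_1'$, $p\sqsubseteq\tau_2$, $pc\sqcup p\sqsubseteq pc'$, $\tau_1'<:\tau_1$, $\Sigma'\subseteq\Sigma$ give $e_1\,e_2:\tau_2$; deref: $e:(\mathsf{ref}\,\tau)^p$, $p\sqsubseteq\tau'$, $\tau<:\tau'$ give $!e:\tau'$; new: $e:\tau'$, $pc\sqsubseteq\tau$, $\tau'|_\Sigma<:\tau$ give $\mathsf{new}(e,\tau):(\mathsf{ref}\,\tau)^\bot$; assign: $e:(\mathsf{ref}\,\tau')^p$, $e':\tau$, $\tau|_\Sigma<:\tau'$,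 $pc\sqcup p\sqsubseteq\tau'$ give $e:=e':\mathsf{unit}^\bot$; when: $\Gamma;\Sigma\cup\{\sigma\};\theta\vdash_{pc\sqcup\mathrm{LockPolicy}(\sigma)}e_1:\tau$, $\Gamma;\Sigma;\theta\vdash_{pc\sqcup\mathrm{LockPolicy}(\sigma)}e_2:\tau$, $\mathrm{LockPolicy}(\sigma)\sqsubseteq\tau$ give $\mathsf{when}\ \sigma\ \mathsf{then}\ e_1\ \mathsf{else}\ e_2:\tau$. (All premises without explicit context use $\Gamma;\Sigma;\theta\vdash_{pc}$.) **Unary relation** (sets of triples, defined by well-founded recursion on the step index $m$). $(S,m)\triangleright\theta$ iff $\mathrm{dom}\,\theta\subseteq\mathrm{dom}\,S$ and for all $l\in\mathrm{dom}\,\theta$: $\theta(l)=\mathrm{type}(S,l)$ and $(S(l),\theta,m)\in\mathcal{V}[\![\theta(l)]\!]$. $\mathcal{V}[\![A^p]\!]=\mathcal{V}[\![A]\!]$; $\mathcal{V}[\![\mathsf{unit}]\!]=\{((),\theta,m)\}$; $\mathcal{V}[\![\mathsf{nat}]\!]=\{(n,\theta,m)\mid n\in\mathbb{N}\}$; $\mathcal{V}[\![\tau_1\times\tau_2]\!]=\{((v_1,v_2),\theta,m)\mid (v_i,\theta,m)\in\mathcal{V}[\![\tau_i]\!]\}$; $\mathcal{V}[\![\tau_1+\tau_2]\!]=\{(\mathsf{inl}(v),\theta,m)\mid(v,\theta,m)\in\mathcal{V}[\![\tau_1]\!]\}\cup\{(\mathsf{inr}(v),\theta,m)\mid(v,\theta,m)\in\mathcal{V}[\![\tau_2]\!]\}$;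 $\mathcal{V}[\![\mathsf{ref}\,\tau]\!]=\{(l,\theta,m)\mid\theta(l)=\tau\}$; $(\lambda x.e,\theta,m)\in\mathcal{V}[\![\tau_1\xrightarrow{\Sigma,pc}\tau_2]\!]$ iff for all $\theta'\sqsupseteq\theta$, $m'<m$, $v$ with $(v,\theta',m')\in\mathcal{V}[\![\tau_1]\!]$: $([v/x]e,\theta',m')\in\mathcal{E}^{pc}[\![\tau_2]\!]$. $\mathcal{E}^{pc}[\![\tau]\!]=\mathcal{V}[\![\tau]\!]\cup\{(e,\theta,m)\mid e\notin\mathcal{V}$ and for all $S,\theta'\sqsupseteq\theta,m'<m,e',S',\omega,\Sigma,\Sigma'$ with $(S,m')\triangleright\theta'$ and $e,\Sigma,S\to e',S',\omega,\Sigma'$: ($\omega=\varepsilon$ or $pc\sqsubseteq\mathrm{pol}(\omega)$) and there is $\theta''\sqsupseteq\theta'$ with $(S',m')\triangleright\theta''$ and $(e',\theta'',m')\in\mathcal{E}^{pc}[\![\tau]\!]\}$. Finally $(\delta,\theta,m)\in\mathcal{V}[\![\Gamma]\!]$ iff $\mathrm{dom}\,\Gamma\subseteq\mathrm{dom}\,\delta$ and $(\delta(x),\theta,m)\in\mathcal{V}[\![\Gamma(x)]\!]$ for all $x\in\mathrm{dom}\,\Gamma$. *)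

theory Defs
  imports Main
begin

text \<open>Actors have type 'a, locks have type 's.  A clause (Sigma => a) is the pair (Sigma, a);
  a policy is a set of clauses.\<close>

type_synonym ('a, 's) pol = "('s set \<times> 'a) set"

definition pol_le :: "('a, 's) pol \<Rightarrow> ('a, 's) pol \<Rightarrow> bool" where
  "pol_le p q \<longleftrightarrow> (\<forall>S2 a. (S2, a) \<in> q \<longrightarrow> (\<exists>S1. (S1, a) \<in> p \<and> S1 \<subseteq> S2))"

definition pbot :: "('a, 's) pol" where
  "pbot = {({}, a) | a. True}"

definition pjoin :: "('a, 's) pol \<Rightarrow> ('a, 's) pol \<Rightarrow> ('a, 's) pol" where
  "pjoin p q = {(S1 \<union> S2, a) | S1 S2 a. (S1, a) \<in> p \<and> (S2, a) \<in> q}"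

definition pspec :: "('a, 's) pol \<Rightarrow> 's set \<Rightarrow> ('a, 's) pol" where
  "pspec p L = {(S1 - L, a) | S1 a. (S1, a) \<in> p}"

datatype ('a, 's) raw =
    TUnit
  | TNat
  | TSum "('a, 's) lty" "('a, 's) lty"
  | TProd "('a, 's) lty" "('a, 's) lty"
  | TRef "('a, 's) lty"
  | TFun "('a, 's) lty" "'s set" "('a, 's) pol" "('a, 's) lty"
and ('a, 's) lty = Lab "('a, 's) raw" "('a, 's) pol"

fun lpol :: "('a, 's) lty \<Rightarrow> ('a, 's) pol" where
  "lpol (Lab A p) = p"

fun lspec :: "('a, 's) lty \<Rightarrow> 's set \<Rightarrow> ('a, 's) lty" where
  "lspec (Lab A p) L = Lab A (pspec p L)"

section \<open>Syntax (de Bruijn indices for variables; locations are naturals)\<close>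

datatype ('a, 's) expr =
    Var nat
  | EUnit
  | ENum nat
  | Lam "('a, 's) expr"                      \<comment> \<open>binds index 0\<close>
  | Pair "('a, 's) expr" "('a, 's) expr"
  | Fst "('a, 's) expr"
  | Snd "('a, 's) expr"
  | EInl "('a, 's) expr"
  | EInr "('a, 's) expr"
  | Case "('a, 's) expr" "('a, 's) expr" "('a, 's) expr"  \<comment> \<open>each branch binds index 0\<close>
  | App "('a, 's) expr" "('a, 's) expr"
  | New "('a, 's) expr" "('a, 's) lty"
  | Deref "('a, 's) expr"
  | Assign "('a, 's) expr" "('a, 's) expr"
  | Open 's "('a, 's) expr"
  | Opened 's "('a, 's) expr"
  | Close 's "('a, 's) expr"
  | Closed 's "('a, 's) expr"
  | When 's "('a, 's) expr" "('a, 's) expr"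
  | Loc nat

fun is_val :: "('a, 's) expr \<Rightarrow> bool" where
  "is_val (Lam e) = True"
| "is_val (Pair v v') = (is_val v \<and> is_val v')"
| "is_val (EInl v) = is_val v"
| "is_val (EInr v) = is_val v"
| "is_val EUnit = True"
| "is_val (Loc l) = True"
| "is_val (ENum n) = True"
| "is_val _ = False"

primrec lift :: "nat \<Rightarrow> ('a, 's) expr \<Rightarrow> ('a, 's) expr" where
  "lift k (Var i) = (if i < k then Var i else Var (Suc i))"
| "lift k EUnit = EUnit"
| "lift k (ENum n) = ENum n"
| "lift k (Lam e) = Lam (lift (Suc k) e)"
| "lift k (Pair e1 e2) = Pair (lift k e1) (lift k e2)"
| "lift k (Fst e) = Fst (lift k e)"
| "lift k (Snd e) = Snd (lift k e)"
| "lift k (EInl e) = EInl (lift k e)"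
| "lift k (EInr e) = EInr (lift k e)"
| "lift k (Case e e1 e2) = Case (lift k e) (lift (Suc k) e1) (lift (Suc k) e2)"
| "lift k (App e1 e2) = App (lift k e1) (lift k e2)"
| "lift k (New e t) = New (lift k e) t"
| "lift k (Deref e) = Deref (lift k e)"
| "lift k (Assign e1 e2) = Assign (lift k e1) (lift k e2)"
| "lift k (Open s e) = Open s (lift k e)"
| "lift k (Opened s e) = Opened s (lift k e)"
| "lift k (Close s e) = Close s (lift k e)"
| "lift k (Closed s e) = Closed s (lift k e)"
| "lift k (When s e1 e2) = When s (lift k e1) (lift k e2)"
| "lift k (Loc l) = Loc l"

definition up :: "(nat \<Rightarrow> ('a, 's) expr) \<Rightarrow> nat \<Rightarrow> ('a, 's) expr" where
  "up \<sigma> = case_nat (Var 0) (\<lambda>i. lift 0 (\<sigma> i))"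

primrec ssubst :: "(nat \<Rightarrow> ('a, 's) expr) \<Rightarrow> ('a, 's) expr \<Rightarrow> ('a, 's) expr" where
  "ssubst \<sigma> (Var i) = \<sigma> i"
| "ssubst \<sigma> EUnit = EUnit"
| "ssubst \<sigma> (ENum n) = ENum n"
| "ssubst \<sigma> (Lam e) = Lam (ssubst (up \<sigma>) e)"
| "ssubst \<sigma> (Pair e1 e2) = Pair (ssubst \<sigma> e1) (ssubst \<sigma> e2)"
| "ssubst \<sigma> (Fst e) = Fst (ssubst \<sigma> e)"
| "ssubst \<sigma> (Snd e) = Snd (ssubst \<sigma> e)"
| "ssubst \<sigma> (EInl e) = EInl (ssubst \<sigma> e)"
| "ssubst \<sigma> (EInr e) = EInr (ssubst \<sigma> e)"
| "ssubst \<sigma> (Case e e1 e2) = Case (ssubst \<sigma> e) (ssubst (up \<sigma>) e1) (ssubst (up \<sigma>) e2)"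
| "ssubst \<sigma> (App e1 e2) = App (ssubst \<sigma> e1) (ssubst \<sigma> e2)"
| "ssubst \<sigma> (New e t) = New (ssubst \<sigma> e) t"
| "ssubst \<sigma> (Deref e) = Deref (ssubst \<sigma> e)"
| "ssubst \<sigma> (Assign e1 e2) = Assign (ssubst \<sigma> e1) (ssubst \<sigma> e2)"
| "ssubst \<sigma> (Open s e) = Open s (ssubst \<sigma> e)"
| "ssubst \<sigma> (Opened s e) = Opened s (ssubst \<sigma> e)"
| "ssubst \<sigma> (Close s e) = Close s (ssubst \<sigma> e)"
| "ssubst \<sigma> (Closed s e) = Closed s (ssubst \<sigma> e)"
| "ssubst \<sigma> (When s e1 e2) = When s (ssubst \<sigma> e1) (ssubst \<sigma> e2)"
| "ssubst \<sigma> (Loc l) = Loc l"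

definition subst0 :: "('a, 's) expr \<Rightarrow> ('a, 's) expr \<Rightarrow> ('a, 's) expr" where
  "subst0 v e = ssubst (case_nat v Var) e"

definition apply_env :: "(nat \<rightharpoonup> ('a, 's) expr) \<Rightarrow> ('a, 's) expr \<Rightarrow> ('a, 's) expr" where
  "apply_env \<delta> e = ssubst (\<lambda>i. case \<delta> i of Some v \<Rightarrow> v | None \<Rightarrow> Var i) e"

type_synonym ('a, 's) state = "nat \<rightharpoonup> (('a, 's) expr \<times> ('a, 's) lty)"
type_synonym ('a, 's) senv = "nat \<rightharpoonup> ('a, 's) lty"

datatype ('a, 's) obs =
    Eps
  | Wr nat "('a, 's) lty" "('a, 's) expr"
  | OOpen 's
  | OClose 's
  | OUnopen 's
  | OUnclose 's

text \<open>pol(epsilon) is undefined; it is never consulted.\<close>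
fun obs_pol :: "('s \<Rightarrow> ('a, 's) pol) \<Rightarrow> ('a, 's) obs \<Rightarrow> ('a, 's) pol" where
  "obs_pol LP (Wr l t v) = lpol t"
| "obs_pol LP (OOpen s) = LP s"
| "obs_pol LP (OClose s) = LP s"
| "obs_pol LP (OUnopen s) = LP s"
| "obs_pol LP (OUnclose s) = LP s"
| "obs_pol LP Eps = undefined"

inductive step :: "('a, 's) expr \<Rightarrow> 's set \<Rightarrow> ('a, 's) state \<Rightarrow> ('a, 's) expr \<Rightarrow> ('a, 's) state
    \<Rightarrow> ('a, 's) obs \<Rightarrow> 's set \<Rightarrow> bool" where
  c_new: "step e L S e' S' w L' \<Longrightarrow> step (New e t) L S (New e' t) S' w L'"
| c_deref: "step e L S e' S' w L' \<Longrightarrow> step (Deref e) L S (Deref e') S' w L'"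
| c_assign1: "step e L S e' S' w L' \<Longrightarrow> step (Assign e e2) L S (Assign e' e2) S' w L'"
| c_assign2: "step e L S e' S' w L' \<Longrightarrow> step (Assign (Loc l) e) L S (Assign (Loc l) e') S' w L'"
| c_app1: "step e L S e' S' w L' \<Longrightarrow> step (App e e2) L S (App e' e2) S' w L'"
| c_app2: "step e L S e' S' w L' \<Longrightarrow> step (App (Lam b) e) L S (App (Lam b) e') S' w L'"
| c_pair1: "step e L S e' S' w L' \<Longrightarrow> step (Pair e e2) L S (Pair e' e2) S' w L'"
| c_pair2: "is_val v \<Longrightarrow> step e L S e' S' w L' \<Longrightarrow> step (Pair v e) L S (Pair v e') S' w L'"
| c_fst: "step e L S e' S' w L' \<Longrightarrow> step (Fst e) L S (Fst e') S' w L'"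
| c_snd: "step e L S e' S' w L' \<Longrightarrow> step (Snd e) L S (Snd e') S' w L'"
| c_inl: "step e L S e' S' w L' \<Longrightarrow> step (EInl e) L S (EInl e') S' w L'"
| c_inr: "step e L S e' S' w L' \<Longrightarrow> step (EInr e) L S (EInr e') S' w L'"
| c_case: "step e L S e' S' w L' \<Longrightarrow> step (Case e e1 e2) L S (Case e' e1 e2) S' w L'"
| l_open: "step (Open s e) L S (Opened s e) S (OOpen s) L"
| l_opened: "step e (L \<union> {s}) S e' S' w L' \<Longrightarrow> step (Opened s e) L S (Opened s e') S' w L'"
| l_opened_v: "is_val v \<Longrightarrow> step (Opened s v) L S v S (OUnopen s) L"
| l_close: "step (Close s e) L S (Closed s e) S (OClose s) L"
| l_closed: "step e (L - {s}) S e' S' w L' \<Longrightarrow> step (Closed s e) L S (Closed s e') S' w L'"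
| l_closed_v: "is_val v \<Longrightarrow> step (Closed s v) L S v S (OUnclose s) L"
| w_then: "s \<in> L \<Longrightarrow> step e L S e'' S' w L' \<Longrightarrow> step (When s e e2) L S (When s e'' e2) S' w L'"
| w_else: "s \<notin> L \<Longrightarrow> step e2 L S e'' S' w L' \<Longrightarrow> step (When s e e2) L S (When s e e'') S' w L'"
| w_then_v: "s \<in> L \<Longrightarrow> is_val v \<Longrightarrow> step (When s v e2) L S v S Eps L"
| w_else_v: "s \<notin> L \<Longrightarrow> is_val v \<Longrightarrow> step (When s e v) L S v S Eps L"
| b_deref: "S l = Some (v, t) \<Longrightarrow> step (Deref (Loc l)) L S v S Eps L"
| b_new: "is_val v \<Longrightarrow> l \<notin> dom S \<Longrightarrow> step (New v t) L S (Loc l) (S(l \<mapsto> (v, t))) (Wr l t v) L"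
| b_assign: "is_val v \<Longrightarrow> S l = Some (u, t) \<Longrightarrow>
     step (Assign (Loc l) v) L S EUnit (S(l \<mapsto> (v, t))) (Wr l t v) L"
| b_beta: "is_val v \<Longrightarrow> step (App (Lam e) v) L S (subst0 v e) S Eps L"
| b_fst: "is_val v \<Longrightarrow> is_val v' \<Longrightarrow> step (Fst (Pair v v')) L S v S Eps L"
| b_snd: "is_val v \<Longrightarrow> is_val v' \<Longrightarrow> step (Snd (Pair v v')) L S v' S Eps L"
| b_case_l: "is_val v \<Longrightarrow> step (Case (EInl v) e1 e2) L S (subst0 v e1) S Eps L"
| b_case_r: "is_val v \<Longrightarrow> step (Case (EInr v) e1 e2) L S (subst0 v e2) S Eps L"

inductive subl :: "('a, 's) lty \<Rightarrow> ('a, 's) lty \<Rightarrow> bool"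
  and subr :: "('a, 's) raw \<Rightarrow> ('a, 's) raw \<Rightarrow> bool" where
  s_lab: "pol_le p p' \<Longrightarrow> subr A B \<Longrightarrow> subl (Lab A p) (Lab B p')"
| s_unit: "subr TUnit TUnit"
| s_nat: "subr TNat TNat"
| s_ref: "subr (TRef t) (TRef t)"
| s_prod: "subl t0 t1 \<Longrightarrow> subl t2 t3 \<Longrightarrow> subr (TProd t0 t2) (TProd t1 t3)"
| s_sum: "subl t0 t1 \<Longrightarrow> subl t2 t3 \<Longrightarrow> subr (TSum t0 t2) (TSum t1 t3)"
| s_fun: "subl t0 t1 \<Longrightarrow> subl t2 t3 \<Longrightarrow> pol_le p' p \<Longrightarrow> L \<subseteq> L' \<Longrightarrow>
          subr (TFun t1 L p t2) (TFun t0 L' p' t3)"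

section \<open>Typing  (typing LP Gamma Sigma theta pc e tau)\<close>

type_synonym ('a, 's) tenv = "nat \<rightharpoonup> ('a, 's) lty"

inductive typing :: "('s \<Rightarrow> ('a, 's) pol) \<Rightarrow> ('a, 's) tenv \<Rightarrow> 's set \<Rightarrow> ('a, 's) senv
    \<Rightarrow> ('a, 's) pol \<Rightarrow> ('a, 's) expr \<Rightarrow> ('a, 's) lty \<Rightarrow> bool"
  for LP :: "'s \<Rightarrow> ('a, 's) pol" where
  t_var: "G x = Some t \<Longrightarrow> typing LP G L th pc (Var x) t"
| t_unit: "typing LP G L th pc EUnit (Lab TUnit pbot)"
| t_num: "typing LP G L th pc (ENum n) (Lab TNat pbot)"
| t_loc: "th l = Some t \<Longrightarrow> typing LP G L th pc (Loc l) (Lab (TRef t) pbot)"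
| t_lam: "typing LP (case_nat (Some t1) G) L' th pc' e t2 \<Longrightarrow>
          typing LP G L th pc (Lam e) (Lab (TFun t1 L' pc' t2) pbot)"
| t_open: "typing LP G (L \<union> {s}) th pc e t \<Longrightarrow> pol_le pc (LP s) \<Longrightarrow> typing LP G L th pc (Open s e) t"
| t_opened: "typing LP G (L \<union> {s}) th pc e t \<Longrightarrow> pol_le pc (LP s) \<Longrightarrow> typing LP G L th pc (Opened s e) t"
| t_close: "typing LP G (L - {s}) th pc e t \<Longrightarrow> pol_le pc (LP s) \<Longrightarrow> typing LP G L th pc (Close s e) t"
| t_closed: "typing LP G (L - {s}) th pc e t \<Longrightarrow> pol_le pc (LP s) \<Longrightarrow> typing LP G L th pc (Closed s e) t"
| t_pair: "typing LP G L th pc e1 t1 \<Longrightarrow> typing LP G L th pc e2 t2 \<Longrightarrow>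
           typing LP G L th pc (Pair e1 e2) (Lab (TProd t1 t2) pbot)"
| t_fst: "typing LP G L th pc e (Lab (TProd t1 t2) p) \<Longrightarrow> pol_le p (lpol t1) \<Longrightarrow>
          typing LP G L th pc (Fst e) t1"
| t_snd: "typing LP G L th pc e (Lab (TProd t1 t2) p) \<Longrightarrow> pol_le p (lpol t2) \<Longrightarrow>
          typing LP G L th pc (Snd e) t2"
| t_inl: "typing LP G L th pc e t1 \<Longrightarrow> typing LP G L th pc (EInl e) (Lab (TSum t1 t2) pbot)"
| t_inr: "typing LP G L th pc e t2 \<Longrightarrow> typing LP G L th pc (EInr e) (Lab (TSum t1 t2) pbot)"
| t_case: "typing LP G L th pc e (Lab (TSum t1 t2) p) \<Longrightarrow> pol_le p (lpol t) \<Longrightarrow>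
           typing LP (case_nat (Some t1) G) L th (pjoin pc p) e1 t \<Longrightarrow>
           typing LP (case_nat (Some t2) G) L th (pjoin pc p) e2 t \<Longrightarrow>
           typing LP G L th pc (Case e e1 e2) t"
| t_sub: "typing LP G L th pc' e t' \<Longrightarrow> pol_le pc pc' \<Longrightarrow> subl t' t \<Longrightarrow> typing LP G L th pc e t"
| t_app: "typing LP G L th pc e1 (Lab (TFun t1 L' pc' t2) p) \<Longrightarrow> typing LP G L th pc e2 t1' \<Longrightarrow>
          pol_le p (lpol t2) \<Longrightarrow> pol_le (pjoin pc p) pc' \<Longrightarrow> subl t1' t1 \<Longrightarrow> L' \<subseteq> L \<Longrightarrow>
          typing LP G L th pc (App e1 e2) t2"
| t_deref: "typing LP G L th pc e (Lab (TRef t) p) \<Longrightarrow> pol_le p (lpol t') \<Longrightarrow> subl t t' \<Longrightarrow>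
            typing LP G L th pc (Deref e) t'"
| t_new: "typing LP G L th pc e t' \<Longrightarrow> pol_le pc (lpol t) \<Longrightarrow> subl (lspec t' L) t \<Longrightarrow>
          typing LP G L th pc (New e t) (Lab (TRef t) pbot)"
| t_assign: "typing LP G L th pc e (Lab (TRef t') p) \<Longrightarrow> typing LP G L th pc e' t \<Longrightarrow>
             subl (lspec t L) t' \<Longrightarrow> pol_le (pjoin pc p) (lpol t') \<Longrightarrow>
             typing LP G L th pc (Assign e e') (Lab TUnit pbot)"
| t_when: "typing LP G (L \<union> {s}) th (pjoin pc (LP s)) e1 t \<Longrightarrow>
           typing LP G L th (pjoin pc (LP s)) e2 t \<Longrightarrow> pol_le (LP s) (lpol t) \<Longrightarrow>
           typing LP G L th pc (When s e1 e2) t"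

section \<open>Unary step-indexed logical relation\<close>

text \<open>vrel LP m tau e theta  means (e, theta, m) in V[[tau]];
  erel LP m pc tau e theta  means (e, theta, m) in E^pc[[tau]].
  theta' extends theta is written as map_le theta theta'.\<close>

function vrel :: "('s \<Rightarrow> ('a, 's) pol) \<Rightarrow> nat \<Rightarrow> ('a, 's) lty \<Rightarrow> ('a, 's) expr \<Rightarrow> ('a, 's) senv \<Rightarrow> bool"
  and vraw :: "('s \<Rightarrow> ('a, 's) pol) \<Rightarrow> nat \<Rightarrow> ('a, 's) raw \<Rightarrow> ('a, 's) expr \<Rightarrow> ('a, 's) senv \<Rightarrow> bool"
  and erel :: "('s \<Rightarrow> ('a, 's) pol) \<Rightarrow> nat \<Rightarrow> ('a, 's) pol \<Rightarrow> ('a, 's) lty \<Rightarrow> ('a, 's) expr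
                \<Rightarrow> ('a, 's) senv \<Rightarrow> bool" where
  "vrel LP m (Lab A p) e th = vraw LP m A e th"
| "vraw LP m TUnit e th = (e = EUnit)"
| "vraw LP m TNat e th = (\<exists>n. e = ENum n)"
| "vraw LP m (TProd t1 t2) e th =
     (\<exists>v1 v2. e = Pair v1 v2 \<and> vrel LP m t1 v1 th \<and> vrel LP m t2 v2 th)"
| "vraw LP m (TSum t1 t2) e th =
     ((\<exists>v. e = EInl v \<and> vrel LP m t1 v th) \<or> (\<exists>v. e = EInr v \<and> vrel LP m t2 v th))"
| "vraw LP m (TRef t) e th = (\<exists>l. e = Loc l \<and> th l = Some t)"
| "vraw LP m (TFun t1 L pc t2) e th =
     (\<exists>b. e = Lam b \<and>
        (\<forall>th' m' v. th \<subseteq>\<^sub>m th' \<longrightarrow> m' < m \<longrightarrow> vrel LP m' t1 v th' \<longrightarrow>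
            erel LP m' pc t2 (subst0 v b) th'))"
| "erel LP m pc t e th =
     (vrel LP m t e th \<or>
      (\<not> is_val e \<and>
       (\<forall>S th' m' e' S' w L L'. th \<subseteq>\<^sub>m th' \<longrightarrow> m' < m \<longrightarrow>
          \<comment> \<open>(S, m') \<triangleright> th'\<close>
          (dom th' \<subseteq> dom S \<and> (\<forall>l u. th' l = Some u \<longrightarrow>
               (\<exists>v. S l = Some (v, u) \<and> vrel LP m' u v th'))) \<longrightarrow>
          step e L S e' S' w L' \<longrightarrow>
          ((w = Eps \<or> pol_le pc (obs_pol LP w)) \<and>
           (\<exists>th''. th' \<subseteq>\<^sub>m th'' \<and>
              \<comment> \<open>(S', m') \<triangleright> th''\<close>
              (dom th'' \<subseteq> dom S' \<and> (\<forall>l u. th'' l = Some u \<longrightarrow>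
                 (\<exists>v. S' l = Some (v, u) \<and> vrel LP m' u v th''))) \<and>
              erel LP m' pc t e' th'')))))"
  by pat_completeness auto
termination
  by (relation "measures [
      \<lambda>x. case x of Inl (LP, m, t, e, th) \<Rightarrow> m | Inr (Inl (LP, m, A, e, th)) \<Rightarrow> m
                 | Inr (Inr (LP, m, pc, t, e, th)) \<Rightarrow> m,
      \<lambda>x. case x of Inl (LP, m, t, e, th) \<Rightarrow> size t | Inr (Inl (LP, m, A, e, th)) \<Rightarrow> size A
                 | Inr (Inr (LP, m, pc, t, e, th)) \<Rightarrow> Suc (size t)]") auto

definition stok :: "('s \<Rightarrow> ('a, 's) pol) \<Rightarrow> ('a, 's) state \<Rightarrow> nat \<Rightarrow> ('a, 's) senv \<Rightarrow> bool" where
  "stok LP S m th \<longleftrightarrow> dom th \<subseteq> dom S \<and>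
     (\<forall>l u. th l = Some u \<longrightarrow> (\<exists>v. S l = Some (v, u) \<and> vrel LP m u v th))"

definition venv :: "('s \<Rightarrow> ('a, 's) pol) \<Rightarrow> nat \<Rightarrow> ('a, 's) tenv \<Rightarrow> (nat \<rightharpoonup> ('a, 's) expr)
    \<Rightarrow> ('a, 's) senv \<Rightarrow> bool" where
  "venv LP m G \<delta> th \<longleftrightarrow> dom G \<subseteq> dom \<delta> \<and>
     (\<forall>x t v. G x = Some t \<longrightarrow> \<delta> x = Some v \<longrightarrow> vrel LP m t v th)"

end

theory Submission
  imports Defs
begin


section \<open>Substitution lemmas\<close>

definition lf :: "nat \<Rightarrow> nat \<Rightarrow> nat" where
  "lf k i = (if i < k then i else Suc i)"

definition upr :: "(nat \<Rightarrow> nat) \<Rightarrow> nat \<Rightarrow> nat" where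
  "upr \<rho> i = (case i of 0 \<Rightarrow> 0 | Suc j \<Rightarrow> Suc (\<rho> j))"

lemma up_ren: "up (\<lambda>i. Var (f i)) = (\<lambda>i. Var (upr f i))"
  by (rule ext) (auto simp: up_def upr_def split: nat.split)

lemma upr_lf: "upr (lf k) = lf (Suc k)"
  by (rule ext) (auto simp: upr_def lf_def split: nat.split)

lemma lift_ren: "lift k e = ssubst (\<lambda>i. Var (lf k i)) e"
  by (induction e arbitrary: k) (simp_all add: up_ren upr_lf, simp add: lf_def)

lemma up_upr: "(\<lambda>i. up \<sigma> (upr \<rho> i)) = up (\<lambda>i. \<sigma> (\<rho> i))"
  by (rule ext) (auto simp: up_def upr_def split: nat.split)

lemma ss_ren: "ssubst \<sigma> (ssubst (\<lambda>i. Var (\<rho> i)) e) = ssubst (\<lambda>i. \<sigma> (\<rho> i)) e"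
  by (induction e arbitrary: \<sigma> \<rho>) (auto simp: up_ren up_upr)

lemma lf0: "lf 0 i = Suc i" by (simp add: lf_def)

lemma ren_ss: "ssubst (\<lambda>i. Var (\<rho> i)) (ssubst \<sigma> e) = ssubst (\<lambda>i. ssubst (\<lambda>j. Var (\<rho> j)) (\<sigma> i)) e"
proof (induction e arbitrary: \<sigma> \<rho>)
  case (Lam e)
  have "(\<lambda>i. ssubst (\<lambda>j. Var (upr \<rho> j)) (up \<sigma> i)) = up (\<lambda>i. ssubst (\<lambda>j. Var (\<rho> j)) (\<sigma> i))"
  proof
    fix i show "ssubst (\<lambda>j. Var (upr \<rho> j)) (up \<sigma> i) = up (\<lambda>i. ssubst (\<lambda>j. Var (\<rho> j)) (\<sigma> i)) i"
      by (cases i) (simp_all add: up_def upr_def lift_ren ss_ren lf0)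
  qed
  then show ?case using Lam by (simp add: up_ren)
next
  case (Case e1 e2 e3)
  have "(\<lambda>i. ssubst (\<lambda>j. Var (upr \<rho> j)) (up \<sigma> i)) = up (\<lambda>i. ssubst (\<lambda>j. Var (\<rho> j)) (\<sigma> i))"
  proof
    fix i show "ssubst (\<lambda>j. Var (upr \<rho> j)) (up \<sigma> i) = up (\<lambda>i. ssubst (\<lambda>j. Var (\<rho> j)) (\<sigma> i)) i"
      by (cases i) (simp_all add: up_def upr_def lift_ren ss_ren lf0)
  qed
  then show ?case using Case by (simp add: up_ren)
qed auto

lemma up_comp: "(\<lambda>i. ssubst (up \<tau>) (up \<sigma> i)) = up (\<lambda>i. ssubst \<tau> (\<sigma> i))"
proof
  fix i show "ssubst (up \<tau>) (up \<sigma> i) = up (\<lambda>i. ssubst \<tau> (\<sigma> i)) i"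
  proof (cases i)
    case (Suc j)
    have "ssubst (up \<tau>) (lift 0 (\<sigma> j)) = ssubst (\<lambda>i. lift 0 (\<tau> i)) (\<sigma> j)"
      by (simp add: lift_ren[of 0 "\<sigma> j"] ss_ren lf0 up_def)
    also have "\<dots> = lift 0 (ssubst \<tau> (\<sigma> j))"
      by (simp add: lift_ren[of 0 "ssubst \<tau> (\<sigma> j)"] ren_ss lift_ren[of 0])
    finally show ?thesis using Suc by (simp add: up_def)
  qed (simp add: up_def)
qed

lemma ss_ss: "ssubst \<tau> (ssubst \<sigma> e) = ssubst (\<lambda>i. ssubst \<tau> (\<sigma> i)) e"
  by (induction e arbitrary: \<sigma> \<tau>) (auto simp: up_comp)

lemma up_Var: "up Var = Var"
  by (rule ext) (auto simp: up_def split: nat.split)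

lemma ss_id: "ssubst Var e = e"
  by (induction e) (auto simp: up_Var)

lemma subst0_up: "subst0 v (ssubst (up \<sigma>) e) = ssubst (case_nat v \<sigma>) e"
proof -
  have "(\<lambda>i. ssubst (case_nat v Var) (up \<sigma> i)) = case_nat v \<sigma>"
  proof
    fix i show "ssubst (case_nat v Var) (up \<sigma> i) = case_nat v \<sigma> i"
    proof (cases i)
      case (Suc j)
      have "ssubst (case_nat v Var) (lift 0 (\<sigma> j)) = \<sigma> j"
        using ss_id[of "\<sigma> j"] by (simp add: lift_ren[of 0] ss_ren lf0)
      then show ?thesis using Suc by (simp add: up_def)
    qed (simp add: up_def)
  qed
  then show ?thesis by (simp add: subst0_def ss_ss)
qed



declare erel.simps[simp del]

lemma pol_le_refl: "pol_le p p"
  unfolding pol_le_def by blast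

lemma pol_le_trans: "pol_le p q \<Longrightarrow> pol_le q r \<Longrightarrow> pol_le p r"
  unfolding pol_le_def by (meson order_trans)

lemma pol_le_join: "pol_le pc (pjoin pc p)"
  unfolding pol_le_def pjoin_def by blast

lemma vrel_val_aux: "(\<forall>e. vraw LP m A e th \<longrightarrow> is_val e) \<and> (\<forall>e. vrel LP m t e th \<longrightarrow> is_val e)"
  by (induction rule: raw_lty.induct) auto

lemma vrel_val: "vrel LP m t e th \<Longrightarrow> is_val e"
  using vrel_val_aux by blast

lemma step_nval: "step e L S e' S' w L' \<Longrightarrow> \<not> is_val e"
  by (induction rule: step.induct) auto

lemma subl_refl_aux: "subr (A::('a,'s) raw) A \<and> subl (t::('a,'s) lty) t"
  by (rule raw_lty.induct[where ?P1.0="\<lambda>A. subr A A" and ?P2.0="\<lambda>t. subl t t"]) (auto intro: subl_subr.intros pol_le_refl)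

lemma subl_refl: "subl t t"
  using subl_refl_aux by blast

lemma erel_iff: "erel LP m pc t e th = (vrel LP m t e th \<or> (\<not> is_val e \<and>
   (\<forall>S th' m' e' S' w L L'. th \<subseteq>\<^sub>m th' \<longrightarrow> m' < m \<longrightarrow> stok LP S m' th' \<longrightarrow>
      step e L S e' S' w L' \<longrightarrow>
      ((w = Eps \<or> pol_le pc (obs_pol LP w)) \<and>
       (\<exists>th''. th' \<subseteq>\<^sub>m th'' \<and> stok LP S' m' th'' \<and> erel LP m' pc t e' th'')))))"
  by (subst erel.simps) (simp only: stok_def)

lemma erel_valI: "vrel LP m t e th \<Longrightarrow> erel LP m pc t e th"
  by (subst erel_iff) blast

lemma erel_valD: "erel LP m pc t e th \<Longrightarrow> is_val e \<Longrightarrow> vrel LP m t e th"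
  by (subst (asm) erel_iff) blast

lemma erel_stepI:
  assumes "\<not> is_val e"
    and "\<And>S th' m' e' S' w L L'. th \<subseteq>\<^sub>m th' \<Longrightarrow> m' < m \<Longrightarrow> stok LP S m' th' \<Longrightarrow>
      step e L S e' S' w L' \<Longrightarrow>
      (w = Eps \<or> pol_le pc (obs_pol LP w)) \<and>
       (\<exists>th''. th' \<subseteq>\<^sub>m th'' \<and> stok LP S' m' th'' \<and> erel LP m' pc t e' th'')"
  shows "erel LP m pc t e th"
  using assms by (subst erel_iff) blast

lemma erel_stepD:
  assumes "erel LP m pc t e th" "\<not> is_val e" "th \<subseteq>\<^sub>m th'" "m' < m" "stok LP S m' th'"
    "step e L S e' S' w L'"
  shows "(w = Eps \<or> pol_le pc (obs_pol LP w)) \<and>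
       (\<exists>th''. th' \<subseteq>\<^sub>m th'' \<and> stok LP S' m' th'' \<and> erel LP m' pc t e' th'')"
proof -
  have "\<not> vrel LP m t e th" using assms(2) vrel_val by blast
  then show ?thesis using assms unfolding erel_iff[of LP m pc t e th] by blast
qed

lemma vrel_mono_aux: "(\<forall>m v th m' th'. vraw LP m A v th \<longrightarrow> m' \<le> m \<longrightarrow> th \<subseteq>\<^sub>m th' \<longrightarrow> vraw LP m' A v th') \<and>
  (\<forall>m v th m' th'. vrel LP m t v th \<longrightarrow> m' \<le> m \<longrightarrow> th \<subseteq>\<^sub>m th' \<longrightarrow> vrel LP m' t v th')"
proof (induction rule: raw_lty.induct)
  case (TRef x)
  then show ?case by (auto simp: map_le_def dom_def)
next
  case (TFun x1 x2 x3 x4)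
  show ?case
  proof (intro allI impI)
    fix m v th m' th'
    assume a: "vraw LP m (TFun x1 x2 x3 x4) v th" "m' \<le> m" "th \<subseteq>\<^sub>m th'"
    then obtain b where b: "v = Lam b" and F: "\<forall>th2. th \<subseteq>\<^sub>m th2 \<longrightarrow>
                (\<forall>m2<m. \<forall>v. vrel LP m2 x1 v th2 \<longrightarrow> erel LP m2 x3 x4 (subst0 v b) th2)" by auto
    have "\<forall>th2. th' \<subseteq>\<^sub>m th2 \<longrightarrow>
                (\<forall>m2<m'. \<forall>v. vrel LP m2 x1 v th2 \<longrightarrow> erel LP m2 x3 x4 (subst0 v b) th2)"
      using F a(2,3) map_le_trans less_le_trans by metis
    then show "vraw LP m' (TFun x1 x2 x3 x4) v th'" using b by auto
  qed
qed auto

lemma vrel_mono: "vrel LP m t v th \<Longrightarrow> m' \<le> m \<Longrightarrow> th \<subseteq>\<^sub>m th' \<Longrightarrow> vrel LP m' t v th'"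
  using vrel_mono_aux by blast

lemma erel_mono:
  assumes "erel LP m pc t e th" "m' \<le> m" "th \<subseteq>\<^sub>m th'"
  shows "erel LP m' pc t e th'"
proof (cases "is_val e")
  case True
  then show ?thesis using assms erel_valD erel_valI vrel_mono by blast
next
  case False
  show ?thesis
  proof (rule erel_stepI[OF False])
    fix S th'' m'' e' S' w L L'
    assume "th' \<subseteq>\<^sub>m th''" "m'' < m'" "stok LP S m'' th''" "step e L S e' S' w L'"
    moreover have "th \<subseteq>\<^sub>m th''" using map_le_trans[OF assms(3)] \<open>th' \<subseteq>\<^sub>m th''\<close> by blast
    moreover have "m'' < m" using \<open>m'' < m'\<close> assms(2) by simp
    ultimately show "(w = Eps \<or> pol_le pc (obs_pol LP w)) \<and>
       (\<exists>th'''. th'' \<subseteq>\<^sub>m th''' \<and> stok LP S' m'' th''' \<and> erel LP m'' pc t e' th''')"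
      using erel_stepD[OF assms(1) False] by blast
  qed
qed

lemma stok_mono_th: "stok LP S m th \<Longrightarrow> m' \<le> m \<Longrightarrow> stok LP S m' th"
  unfolding stok_def using vrel_mono map_le_refl by blast

lemma sub_rel: "(\<forall>t t' v th. subl t t' \<longrightarrow> vrel LP m t v th \<longrightarrow> vrel LP m t' v th) \<and>
  (\<forall>pc pc' t t' e th. subl t t' \<longrightarrow> pol_le pc' pc \<longrightarrow> erel LP m pc t e th \<longrightarrow> erel LP m pc' t' e th)"
proof (induction m rule: less_induct)
  case (less m)
  have V: "(subl t t' \<longrightarrow> (\<forall>v th. vrel LP m t v th \<longrightarrow> vrel LP m t' v th)) \<and>
           (subr A B \<longrightarrow> (\<forall>v th. vraw LP m A v th \<longrightarrow> vraw LP m B v th))" for t t' A B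
  proof (induct rule: subl_subr.induct)
    case (s_fun t0 t1 t2 t3 p' p L L')
    note h = s_fun(1,3,5)
    show "\<forall>v th. vraw LP m (TFun t1 L p t2) v th \<longrightarrow> vraw LP m (TFun t0 L' p' t3) v th"
    proof (intro allI impI)
      fix v th assume "vraw LP m (TFun t1 L p t2) v th"
      then obtain b where b: "v = Lam b" and F: "\<forall>th' m' v. th \<subseteq>\<^sub>m th' \<longrightarrow> m' < m \<longrightarrow> vrel LP m' t1 v th' \<longrightarrow>
            erel LP m' p t2 (subst0 v b) th'" by auto
      show "vraw LP m (TFun t0 L' p' t3) v th"
        using b F less h by simp
    qed
  qed auto
  have E: "erel LP m pc' t' e th" if "subl t t'" "pol_le pc' pc" "erel LP m pc t e th" for pc pc' t t' e th
  proof (cases "is_val e")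
    case True
    then show ?thesis using that V erel_valD erel_valI by blast
  next
    case False
    show ?thesis
    proof (rule erel_stepI[OF False])
      fix S th' m' e' S' w L L'
      assume a: "th \<subseteq>\<^sub>m th'" "m' < m" "stok LP S m' th'" "step e L S e' S' w L'"
      from erel_stepD[OF that(3) False a]
      show "(w = Eps \<or> pol_le pc' (obs_pol LP w)) \<and>
       (\<exists>th''. th' \<subseteq>\<^sub>m th'' \<and> stok LP S' m' th'' \<and> erel LP m' pc' t' e' th'')"
        using less a(2) that pol_le_trans by blast
    qed
  qed
  show ?case using V E by blast
qed

lemma vrel_sub: "vrel LP m t v th \<Longrightarrow> subl t t' \<Longrightarrow> vrel LP m t' v th"
  using sub_rel by blast

lemma erel_sub: "erel LP m pc t e th \<Longrightarrow> subl t t' \<Longrightarrow> pol_le pc' pc \<Longrightarrow> erel LP m pc' t' e th"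
  using sub_rel by blast

lemma erel_pc: "erel LP m pc t e th \<Longrightarrow> pol_le pc' pc \<Longrightarrow> erel LP m pc' t e th"
  using erel_sub subl_refl by blast



inductive_cases step_NewE: "step (New e t) L S e' S' w L'"
inductive_cases step_DerefE: "step (Deref e) L S e' S' w L'"
inductive_cases step_AssignE: "step (Assign e1 e2) L S e' S' w L'"
inductive_cases step_AppE: "step (App e1 e2) L S e' S' w L'"
inductive_cases step_PairE: "step (Pair e1 e2) L S e' S' w L'"
inductive_cases step_FstE: "step (Fst e) L S e' S' w L'"
inductive_cases step_SndE: "step (Snd e) L S e' S' w L'"
inductive_cases step_InlE: "step (EInl e) L S e' S' w L'"
inductive_cases step_InrE: "step (EInr e) L S e' S' w L'"
inductive_cases step_CaseE: "step (Case e e1 e2) L S e' S' w L'"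
inductive_cases step_OpenE: "step (Open s e) L S e' S' w L'"
inductive_cases step_OpenedE: "step (Opened s e) L S e' S' w L'"
inductive_cases step_CloseE: "step (Close s e) L S e' S' w L'"
inductive_cases step_ClosedE: "step (Closed s e) L S e' S' w L'"
inductive_cases step_Assign2E: "step (Assign (Loc l) e) L S e' S' w L'"
inductive_cases step_App2E: "step (App (Lam b) e) L S e' S' w L'"
inductive_cases step_WhenE: "step (When s e1 e2) L S e' S' w L'"

definition ectx :: "(('a, 's) expr \<Rightarrow> ('a, 's) expr) \<Rightarrow> bool" where
  "ectx K \<longleftrightarrow> (\<forall>e. \<not> is_val e \<longrightarrow> \<not> is_val (K e) \<and>
     (\<forall>L S e'' S' w L'. step (K e) L S e'' S' w L' \<longrightarrow> (\<exists>e'. step e L S e' S' w L' \<and> e'' = K e')))"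

lemma bind:
  assumes "ectx K" "erel LP m pc t1 e th"
    "\<And>th' m' v. th \<subseteq>\<^sub>m th' \<Longrightarrow> m' \<le> m \<Longrightarrow> vrel LP m' t1 v th' \<Longrightarrow> erel LP m' pc t (K v) th'"
  shows "erel LP m pc t (K e) th"
  using assms(2,3)
proof (induction m arbitrary: e th rule: less_induct)
  case (less m)
  show ?case
  proof (cases "is_val e")
    case True
    then show ?thesis using less.prems erel_valD[OF less.prems(1) True] by (metis le_refl map_le_refl)
  next
    case False
    have nv: "\<not> is_val (K e)" and inv: "\<And>L S e'' S' w L'. step (K e) L S e'' S' w L' \<Longrightarrow>
        \<exists>e'. step e L S e' S' w L' \<and> e'' = K e'"
      using assms(1) False unfolding ectx_def by blast+
    show ?thesis
    proof (rule erel_stepI[OF nv])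
      fix S th' m' e'' S' w L L'
      assume a: "th \<subseteq>\<^sub>m th'" "m' < m" "stok LP S m' th'" "step (K e) L S e'' S' w L'"
      obtain e' where st: "step e L S e' S' w L'" and e'': "e'' = K e'" using inv[OF a(4)] by blast
      from erel_stepD[OF less.prems(1) False a(1-3) st]
      obtain th'' where ob: "w = Eps \<or> pol_le pc (obs_pol LP w)" and th'': "th' \<subseteq>\<^sub>m th''"
        "stok LP S' m' th''" "erel LP m' pc t1 e' th''" by blast
      have "erel LP m' pc t (K e') th''"
      proof (rule less.IH[OF a(2) th''(3)])
        fix th3 m3 v assume "th'' \<subseteq>\<^sub>m th3" "m3 \<le> m'" "vrel LP m3 t1 v th3"
        then show "erel LP m3 pc t (K v) th3"
          using less.prems(2) map_le_trans[OF a(1) map_le_trans[OF th''(1)]] a(2) by simp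
      qed
      then show "(w = Eps \<or> pol_le pc (obs_pol LP w)) \<and>
         (\<exists>th''. th' \<subseteq>\<^sub>m th'' \<and> stok LP S' m' th'' \<and> erel LP m' pc t e'' th'')"
        using ob th'' e'' by blast
    qed
  qed
qed

lemma ectx_New: "ectx (\<lambda>x. New x t)"
  unfolding ectx_def by (auto elim: step_NewE dest: step_nval)
lemma ectx_Deref: "ectx Deref"
  unfolding ectx_def by (auto elim: step_DerefE dest: step_nval)
lemma ectx_Assign1: "ectx (\<lambda>x. Assign x e2)"
  unfolding ectx_def by (auto elim: step_AssignE dest: step_nval)
lemma ectx_Assign2: "ectx (\<lambda>x. Assign (Loc l) x)"
  unfolding ectx_def by (auto elim!: step_Assign2E dest: step_nval)
lemma ectx_App1: "ectx (\<lambda>x. App x e2)"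
  unfolding ectx_def by (auto elim: step_AppE dest: step_nval)
lemma ectx_App2: "ectx (\<lambda>x. App (Lam b) x)"
  unfolding ectx_def by (auto elim!: step_App2E dest: step_nval)
lemma ectx_Pair1: "ectx (\<lambda>x. Pair x e2)"
  unfolding ectx_def by (auto elim: step_PairE dest: step_nval)
lemma ectx_Pair2: "is_val v \<Longrightarrow> ectx (\<lambda>x. Pair v x)"
  unfolding ectx_def by (auto elim: step_PairE dest: step_nval)
lemma ectx_Fst: "ectx Fst"
  unfolding ectx_def by (auto elim: step_FstE dest: step_nval)
lemma ectx_Snd: "ectx Snd"
  unfolding ectx_def by (auto elim: step_SndE dest: step_nval)
lemma ectx_Inl: "ectx EInl"
  unfolding ectx_def by (auto elim: step_InlE dest: step_nval)
lemma ectx_Inr: "ectx EInr"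
  unfolding ectx_def by (auto elim: step_InrE dest: step_nval)
lemma ectx_Case: "ectx (\<lambda>x. Case x e1 e2)"
  unfolding ectx_def by (auto elim: step_CaseE dest: step_nval)

lemma erel_pure:
  assumes "\<not> is_val e"
    "\<And>L S e' S' w L' m' th'. step e L S e' S' w L' \<Longrightarrow> m' < m \<Longrightarrow> th \<subseteq>\<^sub>m th' \<Longrightarrow> stok LP S m' th' \<Longrightarrow>
        S' = S \<and> w = Eps \<and> erel LP m' pc t e' th'"
  shows "erel LP m pc t e th"
proof (rule erel_stepI[OF assms(1)])
  fix S th' m' e' S' w L L'
  assume a: "th \<subseteq>\<^sub>m th'" "m' < m" "stok LP S m' th'" "step e L S e' S' w L'"
  then show "(w = Eps \<or> pol_le pc (obs_pol LP w)) \<and>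
         (\<exists>th''. th' \<subseteq>\<^sub>m th'' \<and> stok LP S' m' th'' \<and> erel LP m' pc t e' th'')"
    using assms(2)[OF a(4,2,1,3)] map_le_refl by blast
qed

lemma erel_val_mono: "erel LP m pc t v th \<Longrightarrow> is_val v \<Longrightarrow> m' \<le> m \<Longrightarrow> th \<subseteq>\<^sub>m th' \<Longrightarrow> erel LP m' pc' t v th'"
  using erel_valD erel_valI vrel_mono by blast

lemma erel_opened:
  assumes "erel LP m pc t e th" "pol_le pc (LP s)"
  shows "erel LP m pc t (Opened s e) th"
  using assms(1)
proof (induction m arbitrary: e th rule: less_induct)
  case (less m)
  show ?case
  proof (rule erel_stepI)
    fix S th' m' e'' S' w L L'
    assume a: "th \<subseteq>\<^sub>m th'" "m' < m" "stok LP S m' th'" "step (Opened s e) L S e'' S' w L'"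
    from a(4) show "(w = Eps \<or> pol_le pc (obs_pol LP w)) \<and>
         (\<exists>th''. th' \<subseteq>\<^sub>m th'' \<and> stok LP S' m' th'' \<and> erel LP m' pc t e'' th'')"
    proof (rule step_OpenedE)
      fix e' assume h: "e'' = Opened s e'" "step e (insert s L) S e' S' w L'"
      have nv: "\<not> is_val e" using step_nval[OF h(2)] .
      from erel_stepD[OF less.prems nv a(1-3) h(2)] less.IH[OF a(2)] show ?thesis
        using h(1) by blast
    next
      assume h: "e'' = e" "S' = S" "w = OUnopen s" "L' = L" "is_val e"
      have "erel LP m' pc t e th'" using erel_val_mono[OF less.prems h(5)] a(1,2) by simp
      then show ?thesis using h a(3) assms(2) by (auto intro!: exI[where x=th'] simp: map_le_refl)
    qed
  qed simp
qed

lemma erel_closed: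
  assumes "erel LP m pc t e th" "pol_le pc (LP s)"
  shows "erel LP m pc t (Closed s e) th"
  using assms(1)
proof (induction m arbitrary: e th rule: less_induct)
  case (less m)
  show ?case
  proof (rule erel_stepI)
    fix S th' m' e'' S' w L L'
    assume a: "th \<subseteq>\<^sub>m th'" "m' < m" "stok LP S m' th'" "step (Closed s e) L S e'' S' w L'"
    from a(4) show "(w = Eps \<or> pol_le pc (obs_pol LP w)) \<and>
         (\<exists>th''. th' \<subseteq>\<^sub>m th'' \<and> stok LP S' m' th'' \<and> erel LP m' pc t e'' th'')"
    proof (rule step_ClosedE)
      fix e' assume h: "e'' = Closed s e'" "step e (L - {s}) S e' S' w L'"
      have nv: "\<not> is_val e" using step_nval[OF h(2)] .
      from erel_stepD[OF less.prems nv a(1-3) h(2)] less.IH[OF a(2)] show ?thesis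
        using h(1) by blast
    next
      assume h: "e'' = e" "S' = S" "w = OUnclose s" "L' = L" "is_val e"
      have "erel LP m' pc t e th'" using erel_val_mono[OF less.prems h(5)] a(1,2) by simp
      then show ?thesis using h a(3) assms(2) by (auto intro!: exI[where x=th'] simp: map_le_refl)
    qed
  qed simp
qed

lemma erel_open:
  assumes "\<And>m' th'. m' < m \<Longrightarrow> th \<subseteq>\<^sub>m th' \<Longrightarrow> erel LP m' pc t e th'" "pol_le pc (LP s)"
  shows "erel LP m pc t (Open s e) th"
proof (rule erel_stepI)
  fix S th' m' e'' S' w L L'
  assume a: "th \<subseteq>\<^sub>m th'" "m' < m" "stok LP S m' th'" "step (Open s e) L S e'' S' w L'"
  from a(4) show "(w = Eps \<or> pol_le pc (obs_pol LP w)) \<and>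
         (\<exists>th''. th' \<subseteq>\<^sub>m th'' \<and> stok LP S' m' th'' \<and> erel LP m' pc t e'' th'')"
  proof (rule step_OpenE)
    assume h: "e'' = Opened s e" "S' = S" "w = OOpen s" "L' = L"
    have "erel LP m' pc t e'' th'" using erel_opened[OF assms(1)[OF a(2,1)] assms(2)] h(1) by simp
    then show ?thesis using h a(3) assms(2) by (auto intro!: exI[where x=th'] simp: map_le_refl)
  qed
qed simp

lemma erel_close:
  assumes "\<And>m' th'. m' < m \<Longrightarrow> th \<subseteq>\<^sub>m th' \<Longrightarrow> erel LP m' pc t e th'" "pol_le pc (LP s)"
  shows "erel LP m pc t (Close s e) th"
proof (rule erel_stepI)
  fix S th' m' e'' S' w L L'
  assume a: "th \<subseteq>\<^sub>m th'" "m' < m" "stok LP S m' th'" "step (Close s e) L S e'' S' w L'"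
  from a(4) show "(w = Eps \<or> pol_le pc (obs_pol LP w)) \<and>
         (\<exists>th''. th' \<subseteq>\<^sub>m th'' \<and> stok LP S' m' th'' \<and> erel LP m' pc t e'' th'')"
  proof (rule step_CloseE)
    assume h: "e'' = Closed s e" "S' = S" "w = OClose s" "L' = L"
    have "erel LP m' pc t e'' th'" using erel_closed[OF assms(1)[OF a(2,1)] assms(2)] h(1) by simp
    then show ?thesis using h a(3) assms(2) by (auto intro!: exI[where x=th'] simp: map_le_refl)
  qed
qed simp

lemma erel_when:
  assumes "erel LP m pc t e1 th" "erel LP m pc t e2 th"
  shows "erel LP m pc t (When s e1 e2) th"
  using assms
proof (induction m arbitrary: e1 e2 th rule: less_induct)
  case (less m)
  show ?case
  proof (rule erel_stepI)
    fix S th' m' e'' S' w L L'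
    assume a: "th \<subseteq>\<^sub>m th'" "m' < m" "stok LP S m' th'" "step (When s e1 e2) L S e'' S' w L'"
    from a(4) show "(w = Eps \<or> pol_le pc (obs_pol LP w)) \<and>
         (\<exists>th''. th' \<subseteq>\<^sub>m th'' \<and> stok LP S' m' th'' \<and> erel LP m' pc t e'' th'')"
    proof (rule step_WhenE)
      fix e1' assume h0: "e'' = When s e1' e2" "s \<in> L" "step e1 L S e1' S' w L'"
      note st = h0(3)
      have nv: "\<not> is_val e1" using step_nval[OF st] .
      from erel_stepD[OF less.prems(1) nv a(1-3) st] obtain th'' where
        h: "w = Eps \<or> pol_le pc (obs_pol LP w)" "th' \<subseteq>\<^sub>m th''" "stok LP S' m' th''" "erel LP m' pc t e1' th''"
        by blast
      have "th \<subseteq>\<^sub>m th''" using a(1) h(2) map_le_trans by blast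
      then have "erel LP m' pc t e2 th''"
        using erel_mono[OF less.prems(2)] a(2) by simp
      then show ?thesis using less.IH[OF a(2) h(4)] h h0(1) by blast
    next
      fix e2' assume h0: "e'' = When s e1 e2'" "s \<notin> L" "step e2 L S e2' S' w L'"
      note st = h0(3)
      have nv: "\<not> is_val e2" using step_nval[OF st] .
      from erel_stepD[OF less.prems(2) nv a(1-3) st] obtain th'' where
        h: "w = Eps \<or> pol_le pc (obs_pol LP w)" "th' \<subseteq>\<^sub>m th''" "stok LP S' m' th''" "erel LP m' pc t e2' th''"
        by blast
      have "th \<subseteq>\<^sub>m th''" using a(1) h(2) map_le_trans by blast
      then have "erel LP m' pc t e1 th''"
        using erel_mono[OF less.prems(1)] a(2) by simp
      then show ?thesis using less.IH[OF a(2) _ h(4)] h h0(1) by blast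
    next
      assume h: "e'' = e1" "S' = S" "w = Eps" "L' = L" "s \<in> L" "is_val e1"
      have "erel LP m' pc t e1 th'" using erel_val_mono[OF less.prems(1) h(6)] a(1,2) by simp
      then show ?thesis using h a(3) by (auto intro!: exI[where x=th'] simp: map_le_refl)
    next
      assume h: "e'' = e2" "S' = S" "w = Eps" "L' = L" "s \<notin> L" "is_val e2"
      have "erel LP m' pc t e2 th'" using erel_val_mono[OF less.prems(2) h(6)] a(1,2) by simp
      then show ?thesis using h a(3) by (auto intro!: exI[where x=th'] simp: map_le_refl)
    qed
  qed simp
qed



definition genv :: "('s \<Rightarrow> ('a, 's) pol) \<Rightarrow> nat \<Rightarrow> ('a, 's) tenv \<Rightarrow> (nat \<Rightarrow> ('a, 's) expr)
    \<Rightarrow> ('a, 's) senv \<Rightarrow> bool" where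
  "genv LP m G \<sigma> th \<longleftrightarrow> (\<forall>x u. G x = Some u \<longrightarrow> vrel LP m u (\<sigma> x) th)"

lemma genv_mono: "genv LP m G \<sigma> th \<Longrightarrow> m' \<le> m \<Longrightarrow> th \<subseteq>\<^sub>m th' \<Longrightarrow> genv LP m' G \<sigma> th'"
  unfolding genv_def using vrel_mono by blast

lemma genv_cons: "genv LP m G \<sigma> th \<Longrightarrow> vrel LP m t v th \<Longrightarrow>
    genv LP m (case_nat (Some t) G) (case_nat v \<sigma>) th"
  unfolding genv_def by (auto split: nat.split)

lemma vrel_lspec: "vrel LP m (lspec t L) v th = vrel LP m t v th"
  by (cases t) simp

lemma map_le_upd_new: "l \<notin> dom f \<Longrightarrow> f \<subseteq>\<^sub>m f(l \<mapsto> x)"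
  unfolding map_le_def by auto

lemma fundamental:
  "typing LP G L th pc e t \<Longrightarrow> th \<subseteq>\<^sub>m th' \<Longrightarrow> genv LP m G \<sigma> th' \<Longrightarrow> erel LP m pc t (ssubst \<sigma> e) th'"
proof (induction arbitrary: th' m \<sigma> rule: typing.induct)
  case (t_var G x t L th pc)
  then show ?case by (auto simp: genv_def intro: erel_valI)
next
  case (t_unit G L th pc)
  then show ?case by (auto intro: erel_valI)
next
  case (t_num G L th pc n)
  then show ?case by (auto intro: erel_valI)
next
  case (t_loc th l t G L pc)
  have "th' l = Some t" using t_loc by (metis domI map_le_def)
  then show ?case by (auto intro: erel_valI)
next
  case (t_lam t1 G L' th pc' e t2 L pc)
  have "vraw LP m (TFun t1 L' pc' t2) (Lam (ssubst (up \<sigma>) e)) th'"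
    unfolding vraw.simps
  proof (intro exI[of _ "ssubst (up \<sigma>) e"] conjI refl allI impI)
    fix th2 m2 v assume a: "th' \<subseteq>\<^sub>m th2" "m2 < m" "vrel LP m2 t1 v th2"
    show "erel LP m2 pc' t2 (subst0 v (ssubst (up \<sigma>) e)) th2"
      unfolding subst0_up
    proof (rule t_lam.IH)
      show "th \<subseteq>\<^sub>m th2" using t_lam.prems(1) a(1) map_le_trans by blast
      show "genv LP m2 (case_nat (Some t1) G) (case_nat v \<sigma>) th2"
        using genv_cons[OF genv_mono[OF t_lam.prems(2)] a(3)] a by simp
    qed
  qed
  then show ?case by (auto intro: erel_valI)
next
  case (t_open G L s th pc e t)
  show ?case unfolding ssubst.simps
  proof (rule erel_open)
    fix m' th'' assume "m' < m" "th' \<subseteq>\<^sub>m th''"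
    then show "erel LP m' pc t (ssubst \<sigma> e) th''"
      using t_open.IH t_open.prems genv_mono map_le_trans by (metis less_imp_le)
  qed (rule t_open.hyps)
next
  case (t_opened G L s th pc e t)
  show ?case unfolding ssubst.simps
    by (rule erel_opened[OF t_opened.IH[OF t_opened.prems] t_opened.hyps(2)])
next
  case (t_close G L s th pc e t)
  show ?case unfolding ssubst.simps
  proof (rule erel_close)
    fix m' th'' assume "m' < m" "th' \<subseteq>\<^sub>m th''"
    then show "erel LP m' pc t (ssubst \<sigma> e) th''"
      using t_close.IH t_close.prems genv_mono map_le_trans by (metis less_imp_le)
  qed (rule t_close.hyps)
next
  case (t_closed G L s th pc e t)
  show ?case unfolding ssubst.simps
    by (rule erel_closed[OF t_closed.IH[OF t_closed.prems] t_closed.hyps(2)])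
next
  case (t_pair G L th pc e1 t1 e2 t2)
  have E1: "erel LP m pc t1 (ssubst \<sigma> e1) th'" using t_pair.IH(1) t_pair.prems by blast
  show ?case unfolding ssubst.simps
  proof (rule bind[OF ectx_Pair1 E1])
    fix th1 m1 v assume a: "th' \<subseteq>\<^sub>m th1" "m1 \<le> m" "vrel LP m1 t1 v th1"
    have E2: "erel LP m1 pc t2 (ssubst \<sigma> e2) th1"
      using t_pair.IH(2) t_pair.prems a genv_mono map_le_trans by metis
    show "erel LP m1 pc (Lab (TProd t1 t2) pbot) (Pair v (ssubst \<sigma> e2)) th1"
    proof (rule bind[OF ectx_Pair2[OF vrel_val[OF a(3)]] E2])
      fix th2 m2 v2 assume b: "th1 \<subseteq>\<^sub>m th2" "m2 \<le> m1" "vrel LP m2 t2 v2 th2"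
      have "vrel LP m2 t1 v th2" using vrel_mono[OF a(3) b(2,1)] .
      then show "erel LP m2 pc (Lab (TProd t1 t2) pbot) (Pair v v2) th2"
        using b(3) by (auto intro: erel_valI)
    qed
  qed
next
  case (t_fst G L th pc e t1 t2 p)
  have E: "erel LP m pc (Lab (TProd t1 t2) p) (ssubst \<sigma> e) th'" using t_fst.IH t_fst.prems by blast
  show ?case unfolding ssubst.simps
  proof (rule bind[OF ectx_Fst E])
    fix th1 m1 v assume a: "th' \<subseteq>\<^sub>m th1" "m1 \<le> m" "vrel LP m1 (Lab (TProd t1 t2) p) v th1"
    then obtain v1 v2 where v: "v = Pair v1 v2" "vrel LP m1 t1 v1 th1" "vrel LP m1 t2 v2 th1" by auto
    have pv: "is_val (Pair v1 v2)" using vrel_val[OF a(3)] v(1) by simp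
    show "erel LP m1 pc t1 (Fst v) th1"
    proof (rule erel_pure)
      fix L S e' S' w L' m' th'' assume st: "step (Fst v) L S e' S' w L'" and c: "m' < m1" "th1 \<subseteq>\<^sub>m th''"
      from st have "e' = v1 \<and> S' = S \<and> w = Eps"
        by (rule step_FstE) (use pv v(1) in \<open>auto dest: step_nval\<close>)
      then show "S' = S \<and> w = Eps \<and> erel LP m' pc t1 e' th''"
        using vrel_mono[OF v(2) _ c(2), of m'] c(1) by (auto intro: erel_valI)
    qed simp
  qed
next
  case (t_snd G L th pc e t1 t2 p)
  have E: "erel LP m pc (Lab (TProd t1 t2) p) (ssubst \<sigma> e) th'" using t_snd.IH t_snd.prems by blast
  show ?case unfolding ssubst.simps
  proof (rule bind[OF ectx_Snd E])
    fix th1 m1 v assume a: "th' \<subseteq>\<^sub>m th1" "m1 \<le> m" "vrel LP m1 (Lab (TProd t1 t2) p) v th1"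
    then obtain v1 v2 where v: "v = Pair v1 v2" "vrel LP m1 t1 v1 th1" "vrel LP m1 t2 v2 th1" by auto
    have pv: "is_val (Pair v1 v2)" using vrel_val[OF a(3)] v(1) by simp
    show "erel LP m1 pc t2 (Snd v) th1"
    proof (rule erel_pure)
      fix L S e' S' w L' m' th'' assume st: "step (Snd v) L S e' S' w L'" and c: "m' < m1" "th1 \<subseteq>\<^sub>m th''"
      from st have "e' = v2 \<and> S' = S \<and> w = Eps"
        by (rule step_SndE) (use pv v(1) in \<open>auto dest: step_nval\<close>)
      then show "S' = S \<and> w = Eps \<and> erel LP m' pc t2 e' th''"
        using vrel_mono[OF v(3) _ c(2), of m'] c(1) by (auto intro: erel_valI)
    qed simp
  qed
next
  case (t_inl G L th pc e t1 t2)
  have E: "erel LP m pc t1 (ssubst \<sigma> e) th'" using t_inl.IH t_inl.prems by blast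
  show ?case unfolding ssubst.simps
  proof (rule bind[OF ectx_Inl E])
    fix th1 m1 v assume a: "th' \<subseteq>\<^sub>m th1" "m1 \<le> m" "vrel LP m1 t1 v th1"
    then show "erel LP m1 pc (Lab (TSum t1 t2) pbot) (EInl v) th1" by (auto intro: erel_valI)
  qed
next
  case (t_inr G L th pc e t2 t1)
  have E: "erel LP m pc t2 (ssubst \<sigma> e) th'" using t_inr.IH t_inr.prems by blast
  show ?case unfolding ssubst.simps
  proof (rule bind[OF ectx_Inr E])
    fix th1 m1 v assume a: "th' \<subseteq>\<^sub>m th1" "m1 \<le> m" "vrel LP m1 t2 v th1"
    then show "erel LP m1 pc (Lab (TSum t1 t2) pbot) (EInr v) th1" by (auto intro: erel_valI)
  qed
next
  case (t_case G L th pc e t1 t2 p t e1 e2)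
  have E: "erel LP m pc (Lab (TSum t1 t2) p) (ssubst \<sigma> e) th'" using t_case.IH(1) t_case.prems by blast
  show ?case unfolding ssubst.simps
  proof (rule bind[OF ectx_Case E])
    fix th1 m1 v assume a: "th' \<subseteq>\<^sub>m th1" "m1 \<le> m" "vrel LP m1 (Lab (TSum t1 t2) p) v th1"
    have pv: "is_val v" using vrel_val[OF a(3)] .
    have th1: "th \<subseteq>\<^sub>m th1" using t_case.prems(1) a(1) map_le_trans by blast
    show "erel LP m1 pc t (Case v (ssubst (up \<sigma>) e1) (ssubst (up \<sigma>) e2)) th1"
    proof (rule erel_pure)
      fix L S e' S' w L' m' th'' assume st: "step (Case v (ssubst (up \<sigma>) e1) (ssubst (up \<sigma>) e2)) L S e' S' w L'"
        and c: "m' < m1" "th1 \<subseteq>\<^sub>m th''"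
      have th'': "th \<subseteq>\<^sub>m th''" using th1 c(2) map_le_trans by blast
      have G: "genv LP m' G \<sigma> th''" using genv_mono[OF t_case.prems(2)] a(2) c th1 th''
        using a(1) map_le_trans by (metis less_imp_le order_trans)
      from a(3) consider (l) v1 where "v = EInl v1" "vrel LP m1 t1 v1 th1"
        | (r) v2 where "v = EInr v2" "vrel LP m1 t2 v2 th1" by auto
      then show "S' = S \<and> w = Eps \<and> erel LP m' pc t e' th''"
      proof cases
        case l
        from st have "e' = subst0 v1 (ssubst (up \<sigma>) e1) \<and> S' = S \<and> w = Eps"
          by (rule step_CaseE) (use pv l(1) in \<open>auto dest: step_nval\<close>)
        moreover have "erel LP m' (pjoin pc p) t (ssubst (case_nat v1 \<sigma>) e1) th''"
          using t_case.IH(2)[OF th'' genv_cons[OF G vrel_mono[OF l(2) _ c(2)]]] c(1) by simp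
        ultimately show ?thesis using erel_pc pol_le_join subst0_up by metis
      next
        case r
        from st have "e' = subst0 v2 (ssubst (up \<sigma>) e2) \<and> S' = S \<and> w = Eps"
          by (rule step_CaseE) (use pv r(1) in \<open>auto dest: step_nval\<close>)
        moreover have "erel LP m' (pjoin pc p) t (ssubst (case_nat v2 \<sigma>) e2) th''"
          using t_case.IH(3)[OF th'' genv_cons[OF G vrel_mono[OF r(2) _ c(2)]]] c(1) by simp
        ultimately show ?thesis using erel_pc pol_le_join subst0_up by metis
      qed
    qed simp
  qed
next
  case (t_sub G L th pc' e t' pc t)
  then show ?case using erel_sub by blast
next
  case (t_app G L th pc e1 t1 L' pc' t2 p e2 t1')
  have E: "erel LP m pc (Lab (TFun t1 L' pc' t2) p) (ssubst \<sigma> e1) th'" using t_app.IH(1) t_app.prems by blast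
  have pcle: "pol_le pc pc'" using pol_le_trans[OF pol_le_join t_app.hyps(4)] .
  show ?case unfolding ssubst.simps
  proof (rule bind[OF ectx_App1 E])
    fix th1 m1 v assume a: "th' \<subseteq>\<^sub>m th1" "m1 \<le> m" "vrel LP m1 (Lab (TFun t1 L' pc' t2) p) v th1"
    then obtain b where b: "v = Lam b" and F: "\<forall>th2 m2 v2. th1 \<subseteq>\<^sub>m th2 \<longrightarrow> m2 < m1 \<longrightarrow> vrel LP m2 t1 v2 th2 \<longrightarrow>
            erel LP m2 pc' t2 (subst0 v2 b) th2" by auto
    have E2: "erel LP m1 pc t1' (ssubst \<sigma> e2) th1"
      using t_app.IH(2) t_app.prems a genv_mono map_le_trans by metis
    show "erel LP m1 pc t2 (App v (ssubst \<sigma> e2)) th1"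
      unfolding b
    proof (rule bind[OF ectx_App2 E2])
      fix th2 m2 v2 assume c: "th1 \<subseteq>\<^sub>m th2" "m2 \<le> m1" "vrel LP m2 t1' v2 th2"
      have pv: "is_val v2" using vrel_val[OF c(3)] .
      show "erel LP m2 pc t2 (App (Lam b) v2) th2"
      proof (rule erel_pure)
        fix L S e' S' w L' m' th'' assume st: "step (App (Lam b) v2) L S e' S' w L'"
          and d: "m' < m2" "th2 \<subseteq>\<^sub>m th''"
        from st have "e' = subst0 v2 b \<and> S' = S \<and> w = Eps"
          by (rule step_App2E) (use pv in \<open>auto dest: step_nval\<close>)
        moreover have "vrel LP m' t1 v2 th''"
          using vrel_sub[OF vrel_mono[OF c(3) _ d(2)] t_app.hyps(5)] d(1) by simp
        moreover have "th1 \<subseteq>\<^sub>m th''" using c(1) d(2) map_le_trans by blast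
        moreover have "m' < m1" using d(1) c(2) by simp
        ultimately show "S' = S \<and> w = Eps \<and> erel LP m' pc t2 e' th''"
          using F erel_pc pcle by blast
      qed simp
    qed
  qed
next
  case (t_deref G L th pc e t p t')
  have E: "erel LP m pc (Lab (TRef t) p) (ssubst \<sigma> e) th'" using t_deref.IH t_deref.prems by blast
  show ?case unfolding ssubst.simps
  proof (rule bind[OF ectx_Deref E])
    fix th1 m1 v assume a: "th' \<subseteq>\<^sub>m th1" "m1 \<le> m" "vrel LP m1 (Lab (TRef t) p) v th1"
    then obtain l where l: "v = Loc l" "th1 l = Some t" by auto
    show "erel LP m1 pc t' (Deref v) th1"
    proof (rule erel_pure)
      fix L S e' S' w L' m' th'' assume st: "step (Deref v) L S e' S' w L'" and c: "m' < m1" "th1 \<subseteq>\<^sub>m th''"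
        and so: "stok LP S m' th''"
      have "th'' l = Some t" using l(2) c(2) by (metis domI map_le_def)
      then obtain v0 where v0: "S l = Some (v0, t)" "vrel LP m' t v0 th''" using so unfolding stok_def by blast
      from st have "e' = v0 \<and> S' = S \<and> w = Eps"
        by (rule step_DerefE) (use l(1) v0(1) in \<open>auto dest: step_nval\<close>)
      then show "S' = S \<and> w = Eps \<and> erel LP m' pc t' e' th''"
        using vrel_sub[OF v0(2) t_deref.hyps(3)] by (auto intro: erel_valI)
    qed simp
  qed
next
  case (t_new G L th pc e t' t)
  have E: "erel LP m pc t' (ssubst \<sigma> e) th'" using t_new.IH t_new.prems by blast
  show ?case unfolding ssubst.simps
  proof (rule bind[OF ectx_New E])
    fix th1 m1 v assume a: "th' \<subseteq>\<^sub>m th1" "m1 \<le> m" "vrel LP m1 t' v th1"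
    have pv: "is_val v" using vrel_val[OF a(3)] .
    show "erel LP m1 pc (Lab (TRef t) pbot) (New v t) th1"
    proof (rule erel_stepI)
      fix S th2 m' e'' S' w L1 L'
      assume c: "th1 \<subseteq>\<^sub>m th2" "m' < m1" "stok LP S m' th2" "step (New v t) L1 S e'' S' w L'"
      from c(4) obtain l where st: "l \<notin> dom S" "e'' = Loc l" "S' = S(l \<mapsto> (v, t))" "w = Wr l t v"
        by (rule step_NewE) (use pv in \<open>auto dest: step_nval\<close>)
      have ld: "l \<notin> dom th2" using c(3) st(1) unfolding stok_def by blast
      define th3 where "th3 = th2(l \<mapsto> t)"
      have le: "th2 \<subseteq>\<^sub>m th3" unfolding th3_def using map_le_upd_new[OF ld] .
      have vt: "vrel LP m' t v th3"
      proof -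
        have "th1 \<subseteq>\<^sub>m th3" using c(1) le map_le_trans by blast
        then have "vrel LP m' t' v th3" using vrel_mono[OF a(3)] c(2) by simp
        then show ?thesis using vrel_sub t_new.hyps(3) vrel_lspec by metis
      qed
      have "stok LP S' m' th3"
        unfolding stok_def
      proof (intro conjI allI impI)
        show "dom th3 \<subseteq> dom S'" using c(3) st(3) unfolding stok_def th3_def by auto
      next
        fix l0 u assume h: "th3 l0 = Some u"
        show "\<exists>v0. S' l0 = Some (v0, u) \<and> vrel LP m' u v0 th3"
        proof (cases "l0 = l")
          case True then show ?thesis using h vt st(3) th3_def by simp
        next
          case False
          then have "th2 l0 = Some u" using h th3_def by simp
          then obtain v0 where "S l0 = Some (v0, u)" "vrel LP m' u v0 th2" using c(3) unfolding stok_def by blast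
          then show ?thesis using False st(3) vrel_mono[of LP m' u v0 th2 m' th3] le by auto
        qed
      qed
      moreover have "erel LP m' pc (Lab (TRef t) pbot) e'' th3"
        using st(2) th3_def by (auto intro: erel_valI)
      moreover have "pol_le pc (obs_pol LP w)" using st(4) t_new.hyps(2) by simp
      ultimately show "(w = Eps \<or> pol_le pc (obs_pol LP w)) \<and>
         (\<exists>th''. th2 \<subseteq>\<^sub>m th'' \<and> stok LP S' m' th'' \<and> erel LP m' pc (Lab (TRef t) pbot) e'' th'')"
        using le by blast
    qed simp
  qed
next
  case (t_assign G L th pc e t' p e' t)
  have E: "erel LP m pc (Lab (TRef t') p) (ssubst \<sigma> e) th'" using t_assign.IH(1) t_assign.prems by blast
  have pcle: "pol_le pc (lpol t')" using pol_le_trans[OF pol_le_join t_assign.hyps(4)] .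
  show ?case unfolding ssubst.simps
  proof (rule bind[OF ectx_Assign1 E])
    fix th1 m1 v assume a: "th' \<subseteq>\<^sub>m th1" "m1 \<le> m" "vrel LP m1 (Lab (TRef t') p) v th1"
    then obtain l where l: "v = Loc l" "th1 l = Some t'" by auto
    have E2: "erel LP m1 pc t (ssubst \<sigma> e') th1"
      using t_assign.IH(2) t_assign.prems a genv_mono map_le_trans by metis
    show "erel LP m1 pc (Lab TUnit pbot) (Assign v (ssubst \<sigma> e')) th1"
      unfolding l(1)
    proof (rule bind[OF ectx_Assign2 E2])
      fix th2 m2 v2 assume b: "th1 \<subseteq>\<^sub>m th2" "m2 \<le> m1" "vrel LP m2 t v2 th2"
      have pv: "is_val v2" using vrel_val[OF b(3)] .
      show "erel LP m2 pc (Lab TUnit pbot) (Assign (Loc l) v2) th2"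
      proof (rule erel_stepI)
        fix S th3 m' e'' S' w L1 L'
        assume c: "th2 \<subseteq>\<^sub>m th3" "m' < m2" "stok LP S m' th3" "step (Assign (Loc l) v2) L1 S e'' S' w L'"
        have l3: "th3 l = Some t'" using l(2) map_le_trans[OF b(1) c(1)] by (metis domI map_le_def)
        then obtain u0 where u0: "S l = Some (u0, t')" using c(3) unfolding stok_def by blast
        from c(4) obtain u t0 where st: "e'' = EUnit" "S' = S(l \<mapsto> (v2, t0))" "w = Wr l t0 v2" "S l = Some (u, t0)"
          by (rule step_Assign2E) (use pv in \<open>auto dest: step_nval\<close>)
        have t0: "t0 = t'" using st(4) u0 by simp
        have vt: "vrel LP m' t' v2 th3"
        proof -
          have "vrel LP m' t v2 th3" using vrel_mono[OF b(3)] c(1,2) by simp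
          then show ?thesis using vrel_sub t_assign.hyps(3) vrel_lspec by metis
        qed
        have "stok LP S' m' th3"
          unfolding stok_def
        proof (intro conjI allI impI)
          show "dom th3 \<subseteq> dom S'" using c(3) st(2) unfolding stok_def by auto
        next
          fix l0 u assume h: "th3 l0 = Some u"
          show "\<exists>v0. S' l0 = Some (v0, u) \<and> vrel LP m' u v0 th3"
          proof (cases "l0 = l")
            case True then show ?thesis using h vt st(2) t0 l3 by simp
          next
            case False
            then show ?thesis using h c(3) st(2) unfolding stok_def by auto
          qed
        qed
        moreover have "erel LP m' pc (Lab TUnit pbot) e'' th3"
          using st(1) by (auto intro: erel_valI)
        moreover have "pol_le pc (obs_pol LP w)" using st(3) t0 pcle by simp
        ultimately show "(w = Eps \<or> pol_le pc (obs_pol LP w)) \<and>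
           (\<exists>th''. th3 \<subseteq>\<^sub>m th'' \<and> stok LP S' m' th'' \<and> erel LP m' pc (Lab TUnit pbot) e'' th'')"
          using map_le_refl by blast
      qed simp
    qed
  qed
next
  case (t_when G L s th pc e1 t e2)
  have E1: "erel LP m pc t (ssubst \<sigma> e1) th'"
    using t_when.IH(1)[OF t_when.prems] erel_pc pol_le_join by blast
  have E2: "erel LP m pc t (ssubst \<sigma> e2) th'"
    using t_when.IH(2)[OF t_when.prems] erel_pc pol_le_join by blast
  show ?case unfolding ssubst.simps by (rule erel_when[OF E1 E2])
qed


theorem mainTheorem3:
  fixes LP :: "'s \<Rightarrow> ('a, 's) pol"
  assumes "typing LP G L th pc e t"
    and "th \<subseteq>\<^sub>m th'"
    and "venv LP m G \<delta> th'"
  shows "erel LP m pc t (apply_env \<delta> e) th'"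
proof -
  have "genv LP m G (\<lambda>i. case \<delta> i of Some v \<Rightarrow> v | None \<Rightarrow> Var i) th'"
    unfolding genv_def
  proof (intro allI impI)
    fix x u assume h: "G x = Some u"
    then have "x \<in> dom \<delta>" using assms(3) unfolding venv_def by blast
    then obtain v where v: "\<delta> x = Some v" by blast
    then show "vrel LP m u (case \<delta> x of Some v \<Rightarrow> v | None \<Rightarrow> Var x) th'"
      using h assms(3) unfolding venv_def by simp
  qed
  then show ?thesis unfolding apply_env_def using fundamental assms(1,2) by blast
qed

end
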